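(* Let $\lambda,d\ge0$ and let $\mu\ge1$ be an integer. Let $u\in\Gamma^*$ be a $\mu$-locally $(\lambda,d)$-quasi-geodesic word in $G$. Then there is a word $v\in\Gamma^*$ of length less than $|\Gamma|^\mu$ such that for all $x,y\in\Gamma^*$ the word $xuy$ is $\mu$-locally $(\lambda,d)$-quasi-geodesic if and only if $xvy$ is $\mu$-locally $(\lambda,d)$-quasi-geodesic. Moreover, if $u\ne v$ then $|v|\ge\mu-1$.
   Context: $G$ is a torsion-free non-elementary $\delta$-hyperbolic group generated by a finite set $\Sigma\subseteq G\setminus\{1\}$; $\Gamma=\Sigma\cup\bar\Sigma$ where $\bar\Sigma=\Sigma^{-1}$ is regarded as a disjoint copy of $\Sigma$, and $\pi:\Gamma^*\to G$ is the canonical morphism. For $w\in\Gamma^*$, $|w|$ is its length and $|w|_G$ is the length of a shortest word $u$ with $\pi(u)=\pi(w)$. A word $w$ is $(\lambda,d)$-quasi-geodesic if every factor $u$ of $w$ satisfies $|u|\le\lambda|u|_G+d$; it is $\mu$-locally $(\lambda,d)$-quasi-geodesic if every factor of $w$ of length at most $\mu$ is $(\lambda,d)$-quasi-geodesic. *)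

theory Defs
  imports "HOL-Algebra.Algebra"
begin

text \<open>Alphabet Gamma = Sigma disjoint-union Sigma-bar, encoded as Sigma <+> Sigma:
  Inl s stands for s, Inr s stands for the formal inverse letter of s.\<close>

definition alphabet :: "'a set \<Rightarrow> ('a + 'a) set" where
  "alphabet S = S <+> S"

fun letter_val :: "('a, 'b) monoid_scheme \<Rightarrow> ('a + 'a) \<Rightarrow> 'a" where
  "letter_val G (Inl s) = s"
| "letter_val G (Inr s) = inv\<^bsub>G\<^esub> s"

definition word_eval :: "('a, 'b) monoid_scheme \<Rightarrow> ('a + 'a) list \<Rightarrow> 'a" where
  "word_eval G w = foldr (\<lambda>c acc. letter_val G c \<otimes>\<^bsub>G\<^esub> acc) w \<one>\<^bsub>G\<^esub>"

definition elem_len :: "('a, 'b) monoid_scheme \<Rightarrow> 'a set \<Rightarrow> 'a \<Rightarrow> nat" where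
  "elem_len G S g = (LEAST n. \<exists>u \<in> lists (alphabet S). length u = n \<and> word_eval G u = g)"

definition geo_len :: "('a, 'b) monoid_scheme \<Rightarrow> 'a set \<Rightarrow> ('a + 'a) list \<Rightarrow> nat" where
  "geo_len G S w = elem_len G S (word_eval G w)"

definition is_factor :: "'c list \<Rightarrow> 'c list \<Rightarrow> bool" where
  "is_factor f w \<longleftrightarrow> (\<exists>p s. w = p @ f @ s)"

definition quasi_geodesic ::
  "('a, 'b) monoid_scheme \<Rightarrow> 'a set \<Rightarrow> real \<Rightarrow> real \<Rightarrow> ('a + 'a) list \<Rightarrow> bool" where
  "quasi_geodesic G S lam d w \<longleftrightarrow>
     (\<forall>f. is_factor f w \<longrightarrow> real (length f) \<le> lam * real (geo_len G S f) + d)"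

definition locally_quasi_geodesic ::
  "('a, 'b) monoid_scheme \<Rightarrow> 'a set \<Rightarrow> nat \<Rightarrow> real \<Rightarrow> real \<Rightarrow> ('a + 'a) list \<Rightarrow> bool" where
  "locally_quasi_geodesic G S mu lam d w \<longleftrightarrow>
     (\<forall>f. is_factor f w \<and> length f \<le> mu \<longrightarrow> quasi_geodesic G S lam d f)"

definition word_dist :: "('a, 'b) monoid_scheme \<Rightarrow> 'a set \<Rightarrow> 'a \<Rightarrow> 'a \<Rightarrow> real" where
  "word_dist G S g h = real (elem_len G S (inv\<^bsub>G\<^esub> g \<otimes>\<^bsub>G\<^esub> h))"

definition gromov_product ::
  "('a, 'b) monoid_scheme \<Rightarrow> 'a set \<Rightarrow> 'a \<Rightarrow> 'a \<Rightarrow> 'a \<Rightarrow> real" where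
  "gromov_product G S w x y =
     (word_dist G S w x + word_dist G S w y - word_dist G S x y) / 2"

definition hyperbolic_wrt :: "('a, 'b) monoid_scheme \<Rightarrow> 'a set \<Rightarrow> real \<Rightarrow> bool" where
  "hyperbolic_wrt G S \<delta> \<longleftrightarrow> \<delta> \<ge> 0 \<and>
     (\<forall>w\<in>carrier G. \<forall>x\<in>carrier G. \<forall>y\<in>carrier G. \<forall>z\<in>carrier G.
        gromov_product G S w x y \<ge>
          min (gromov_product G S w x z) (gromov_product G S w y z) - \<delta>)"

definition torsion_free :: "('a, 'b) monoid_scheme \<Rightarrow> bool" where
  "torsion_free G \<longleftrightarrow>
     (\<forall>g\<in>carrier G. g \<noteq> \<one>\<^bsub>G\<^esub> \<longrightarrow> (\<forall>n::nat. n > 0 \<longrightarrow> g [^]\<^bsub>G\<^esub> n \<noteq> \<one>\<^bsub>G\<^esub>))"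

text \<open>Virtually cyclic: has a cyclic subgroup of finite index (includes finite groups).
  A hyperbolic group is elementary iff it is virtually cyclic.\<close>
definition virtually_cyclic :: "('a, 'b) monoid_scheme \<Rightarrow> bool" where
  "virtually_cyclic G \<longleftrightarrow>
     (\<exists>g\<in>carrier G. finite (rcosets\<^bsub>G\<^esub> (generate G {g})))"

end

theory Submission
  imports Defs
begin

lemma factor_app: "is_factor f z \<Longrightarrow> is_factor f (p @ z @ s)"
  unfolding is_factor_def by (metis append.assoc)

lemma factor_self: "is_factor f (p @ f @ s)"
  unfolding is_factor_def by blast

lemma factor_idx: "is_factor f z \<longleftrightarrow> (\<exists>i. i + length f \<le> length z \<and> f = take (length f) (drop i z))"
proof
  assume "is_factor f z"
  then obtain p s where "z = p @ f @ s" unfolding is_factor_def by blast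
  then show "\<exists>i. i + length f \<le> length z \<and> f = take (length f) (drop i z)"
    by (intro exI[of _ "length p"]) auto
next
  assume "\<exists>i. i + length f \<le> length z \<and> f = take (length f) (drop i z)"
  then obtain i where i: "i + length f \<le> length z" "f = take (length f) (drop i z)" by blast
  have "z = take i z @ take (length f) (drop i z) @ drop (length f) (drop i z)"
    by (simp only: append_take_drop_id)
  then show "is_factor f z" unfolding is_factor_def using i by metis
qed

lemma factor_split:
  assumes "is_factor f (a @ w @ b)" "length f \<le> length w + 1"
  shows "is_factor f (a @ w) \<or> is_factor f (w @ b)"
proof -
  obtain i where i: "i + length f \<le> length (a @ w @ b)" "f = take (length f) (drop i (a @ w @ b))"
    using assms(1) factor_idx by blast
  show ?thesis
  proof (cases "i + length f \<le> length a + length w")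
    case True
    have "f = take (length f) (drop i (a @ w))"
      using i(2) True by (simp add: take_append drop_append)
    then show ?thesis using True factor_idx[of f "a @ w"] by auto
  next
    case False
    then have ia: "i \<ge> length a" using assms(2) by linarith
    have "f = take (length f) (drop (i - length a) (w @ b))"
      using i(2) ia by (simp add: drop_append)
    then show ?thesis using i(1) ia factor_idx[of f "w @ b"] 
    proof -
      have "i - length a + length f \<le> length (w @ b)" using i(1) ia by simp
      then show ?thesis using \<open>f = take (length f) (drop (i - length a) (w @ b))\<close>
        factor_idx[of f "w @ b"] by blast
    qed
  qed
qed

lemma step_equiv:
  assumes mu: "mu \<ge> 1" and ij: "i < j" "j + (mu - 1) \<le> length u"
    and eq: "take (mu - 1) (drop i u) = take (mu - 1) (drop j u)"
    and lu: "locally_quasi_geodesic G S mu lam d u"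
  shows "locally_quasi_geodesic G S mu lam d (x @ u @ y) \<longleftrightarrow>
         locally_quasi_geodesic G S mu lam d (x @ (take i u @ drop j u) @ y)"
proof -
  define m where "m = mu - 1"
  define w where "w = take m (drop i u)"
  have lw: "length w + 1 = mu" using ij mu unfolding w_def m_def by simp
  have dj: "drop j u = w @ drop (j + m) u" using eq ij unfolding w_def m_def
    by (metis add.commute append_take_drop_id drop_drop)
  have di: "drop i u = w @ drop (i + m) u" unfolding w_def
    by (metis add.commute append_take_drop_id drop_drop)
  have E1: "x @ u @ y = (x @ take i u) @ w @ (drop (i + m) u @ y)"
    using di by (metis append.assoc append_take_drop_id)
  have E2: "x @ (take i u @ drop j u) @ y = (x @ take i u) @ w @ (drop (j + m) u @ y)"
    using dj by simp
  have dij: "drop i u = take (j - i) (drop i u) @ drop j u"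
    using ij by (metis append_take_drop_id drop_drop le_add_diff_inverse2 less_imp_le)
  have E3: "w @ drop (i + m) u @ y = take (j - i) (drop i u) @ w @ (drop (j + m) u @ y)"
    using di dij dj by (metis append.assoc)
  have F1: "is_factor ((x @ take i u) @ w) (x @ u @ y)"
  proof -
    have "(x @ u @ y) = [] @ ((x @ take i u) @ w) @ (drop (i + m) u @ y)" using E1 by simp
    then show ?thesis using factor_self by metis
  qed
  have F2: "is_factor (w @ drop (j + m) u @ y) (x @ u @ y)"
  proof -
    have "x @ u @ y = (x @ take j u) @ (w @ drop (j + m) u @ y) @ []"
      using dj by (metis append.assoc append_Nil2 append_take_drop_id)
    then show ?thesis using factor_self by metis
  qed
  have F3: "is_factor (take (j - i) (drop i u) @ w) u"
  proof -
    have "u = take i u @ (take (j - i) (drop i u) @ w) @ drop (j + m) u"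
      using dij dj by (metis append.assoc append_take_drop_id)
    then show ?thesis using factor_self by metis
  qed
  have F4: "is_factor ((x @ take i u) @ w) (x @ (take i u @ drop j u) @ y)"
  proof -
    have "(x @ (take i u @ drop j u) @ y) = [] @ ((x @ take i u) @ w) @ (drop (j + m) u @ y)" using E2 by simp
    then show ?thesis using factor_self by metis
  qed
  have F5: "is_factor (w @ drop (j + m) u @ y) (x @ (take i u @ drop j u) @ y)"
  proof -
    have "(x @ (take i u @ drop j u) @ y) = (x @ take i u) @ (w @ drop (j + m) u @ y) @ []" using E2 by simp
    then show ?thesis using factor_self by metis
  qed
  have F6: "is_factor (w @ drop (i + m) u @ y) (x @ u @ y)"
  proof -
    have "(x @ u @ y) = (x @ take i u) @ (w @ drop (i + m) u @ y) @ []" using E1 by simp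
    then show ?thesis using factor_self by metis
  qed
  have trans: "is_factor f a \<Longrightarrow> is_factor a b \<Longrightarrow> is_factor f b" for f a b :: "'c list"
    unfolding is_factor_def by (metis append.assoc)
  show ?thesis
  proof
    assume L: "locally_quasi_geodesic G S mu lam d (x @ u @ y)"
    show "locally_quasi_geodesic G S mu lam d (x @ (take i u @ drop j u) @ y)"
      unfolding locally_quasi_geodesic_def
    proof (intro allI impI)
      fix f assume f: "is_factor f (x @ (take i u @ drop j u) @ y) \<and> length f \<le> mu"
      then have "is_factor f ((x @ take i u) @ w) \<or> is_factor f (w @ drop (j + m) u @ y)"
        using factor_split[of f "x @ take i u" w "drop (j + m) u @ y"] E2 lw by simp
      then have "is_factor f (x @ u @ y)" using F1 F2 trans by blast
      then show "quasi_geodesic G S lam d f" using L f unfolding locally_quasi_geodesic_def by blast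
    qed
  next
    assume R: "locally_quasi_geodesic G S mu lam d (x @ (take i u @ drop j u) @ y)"
    show "locally_quasi_geodesic G S mu lam d (x @ u @ y)"
      unfolding locally_quasi_geodesic_def
    proof (intro allI impI)
      fix f assume f: "is_factor f (x @ u @ y) \<and> length f \<le> mu"
      then have "is_factor f ((x @ take i u) @ w) \<or> is_factor f (w @ drop (i + m) u @ y)"
        using factor_split[of f "x @ take i u" w "drop (i + m) u @ y"] E1 lw by simp
      then show "quasi_geodesic G S lam d f"
      proof
        assume "is_factor f ((x @ take i u) @ w)"
        then show ?thesis using F4 trans R f unfolding locally_quasi_geodesic_def by blast
      next
        assume "is_factor f (w @ drop (i + m) u @ y)"
        then have "is_factor f (take (j - i) (drop i u) @ w) \<or> is_factor f (w @ drop (j + m) u @ y)"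
          using factor_split[of f "take (j - i) (drop i u)" w "drop (j + m) u @ y"] E3 lw f by simp
        then show ?thesis
        proof
          assume "is_factor f (take (j - i) (drop i u) @ w)"
          then show ?thesis using F3 trans lu f unfolding locally_quasi_geodesic_def by blast
        next
          assume "is_factor f (w @ drop (j + m) u @ y)"
          then show ?thesis using F5 trans R f unfolding locally_quasi_geodesic_def by blast
        qed
      qed
    qed
  qed
qed

lemma reduce:
  fixes A :: "('a + 'a) set" and G :: "('a, 'b) monoid_scheme"
  assumes A: "finite A" and mu: "mu \<ge> 1"
  shows "u \<in> lists A \<Longrightarrow> locally_quasi_geodesic G S mu lam d u \<Longrightarrow>
    \<exists>v \<in> lists A. length v < card A ^ (mu - 1) + (mu - 1) \<and>
      (\<forall>x y. locally_quasi_geodesic G S mu lam d (x @ u @ y) \<longleftrightarrow>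
              locally_quasi_geodesic G S mu lam d (x @ v @ y)) \<and>
      (u \<noteq> v \<longrightarrow> length v \<ge> mu - 1)"
proof (induction "length u" arbitrary: u rule: less_induct)
  case less
  define m where "m = mu - 1"
  show ?case
  proof (cases "length u < card A ^ m + m")
    case True
    then show ?thesis using less.prems unfolding m_def by blast
  next
    case False
    define L where "L = length u"
    define P where "P = {..L - m}"
    define h where "h i = take m (drop i u)" for i
    have sub: "h ` P \<subseteq> {xs. set xs \<subseteq> A \<and> length xs = m}"
    proof
      fix z assume "z \<in> h ` P"
      then obtain i where i: "i \<le> L - m" "z = h i" unfolding P_def by auto
      have "length z = m" using i False unfolding h_def L_def by auto
      moreover have "set z \<subseteq> set u" unfolding i h_def
        by (meson in_set_dropD in_set_takeD subsetI)
      ultimately show "z \<in> {xs. set xs \<subseteq> A \<and> length xs = m}"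
        using less.prems(1) by (auto simp: in_lists_conv_set)
    qed
    have "card (h ` P) \<le> card A ^ m"
      using card_mono[OF finite_lists_length_eq[OF A] sub] card_lists_length_eq[OF A] by simp
    moreover have "card P = L - m + 1" unfolding P_def by simp
    ultimately have "card (h ` P) < card P" using False unfolding L_def by linarith
    then have "\<not> inj_on h P" by (rule pigeonhole)
    then obtain i j where ij0: "i \<in> P" "j \<in> P" "i \<noteq> j" "h i = h j"
      unfolding inj_on_def by blast
    then obtain i j where ij: "i < j" "j \<le> L - m" "h i = h j"
      unfolding P_def by (metis atMost_iff linorder_neq_iff order.strict_trans2 less_imp_le)
    have jL: "j + m \<le> length u" using ij False unfolding L_def by linarith
    define u' where "u' = take i u @ drop j u"
    have eqv: "locally_quasi_geodesic G S mu lam d (x @ u @ y) \<longleftrightarrow>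
         locally_quasi_geodesic G S mu lam d (x @ u' @ y)" for x y
      unfolding u'_def
      by (rule step_equiv[OF mu ij(1)]) (use jL ij less.prems in \<open>auto simp: m_def h_def\<close>)
    have lu': "locally_quasi_geodesic G S mu lam d u'" using eqv[of "[]" "[]"] less.prems by simp
    have u'A: "u' \<in> lists A" using less.prems(1) unfolding u'_def
      by (auto simp: in_lists_conv_set dest: in_set_dropD in_set_takeD)
    have len': "length u' < length u" "length u' \<ge> m" unfolding u'_def using ij jL by auto
    from less.hyps[OF len'(1) u'A lu'] obtain v where v: "v \<in> lists A"
      "length v < card A ^ (mu - 1) + (mu - 1)"
      "\<forall>x y. locally_quasi_geodesic G S mu lam d (x @ u' @ y) \<longleftrightarrow>
              locally_quasi_geodesic G S mu lam d (x @ v @ y)"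
      "u' \<noteq> v \<longrightarrow> length v \<ge> mu - 1" by blast
    show ?thesis
      using v eqv len' unfolding m_def by (intro bexI[OF _ v(1)]) metis
  qed
qed

lemma pow_bound:
  fixes k m :: nat assumes "k \<ge> 2"
  shows "k ^ m + m \<le> k ^ (m + 1)"
proof -
  have "m < 2 ^ m" by (rule less_exp)
  also have "2 ^ m \<le> k ^ m" using assms by (simp add: power_mono)
  finally have "m \<le> k ^ m" by simp
  moreover have "2 * k ^ m \<le> k * k ^ m" using assms by (intro mult_right_mono) auto
  ultimately have "k ^ m + m \<le> k * k ^ m" by linarith
  then show ?thesis by simp
qed

theorem mainTheorem6:
  fixes G :: "('a, 'b) monoid_scheme" and S :: "'a set"
    and \<delta> lam d :: real and mu :: nat and u :: "('a + 'a) list"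
  assumes "group G"
    and "finite S" and "S \<subseteq> carrier G - {\<one>\<^bsub>G\<^esub>}" and "generate G S = carrier G"
    and "hyperbolic_wrt G S \<delta>"
    and "torsion_free G" and "\<not> virtually_cyclic G"
    and "lam \<ge> 0" and "d \<ge> 0" and "mu \<ge> 1"
    and "u \<in> lists (alphabet S)"
    and "locally_quasi_geodesic G S mu lam d u"
  shows "\<exists>v \<in> lists (alphabet S).
           length v < card (alphabet S) ^ mu \<and>
           (\<forall>x \<in> lists (alphabet S). \<forall>y \<in> lists (alphabet S).
              locally_quasi_geodesic G S mu lam d (x @ u @ y) \<longleftrightarrow>
              locally_quasi_geodesic G S mu lam d (x @ v @ y)) \<and>
           (u \<noteq> v \<longrightarrow> length v \<ge> mu - 1)"
proof -
  have Sne: "S \<noteq> {}"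
  proof
    assume "S = {}"
    then have c: "carrier G = {\<one>\<^bsub>G\<^esub>}"
      using assms(4) group.generate_empty[OF assms(1)] by simp
    have "virtually_cyclic G"
      unfolding virtually_cyclic_def
    proof (intro bexI[of _ "\<one>\<^bsub>G\<^esub>"])
      show "finite (rcosets\<^bsub>G\<^esub> generate G {\<one>\<^bsub>G\<^esub>})"
        unfolding RCOSETS_def c by simp
    qed (simp add: c)
    then show False using assms(7) by blast
  qed
  have fin: "finite (alphabet S)" using assms(2) unfolding alphabet_def by simp
  have k2: "card (alphabet S) \<ge> 2"
  proof -
    have "card S \<ge> 1" using Sne assms(2) by (simp add: Suc_le_eq card_gt_0_iff)
    then show ?thesis unfolding alphabet_def using card_Plus[OF assms(2) assms(2)] by simp
  qed
  obtain v where v: "v \<in> lists (alphabet S)"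
      "length v < card (alphabet S) ^ (mu - 1) + (mu - 1)"
      "\<forall>x y. locally_quasi_geodesic G S mu lam d (x @ u @ y) \<longleftrightarrow>
              locally_quasi_geodesic G S mu lam d (x @ v @ y)"
      "u \<noteq> v \<longrightarrow> length v \<ge> mu - 1"
    using reduce[OF fin assms(10) assms(11) assms(12)] by blast
  have "length v < card (alphabet S) ^ mu"
    using v(2) pow_bound[OF k2, of "mu - 1"] assms(10) by simp
  then show ?thesis using v by blast
qed

end
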